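(* Let $\theta:[0,1]\to[0,\infty]$ and $\vartheta:[0,\infty]\to[0,1]$ be continuous and decreasing functions, and suppose that the function $O_{\theta,\vartheta}:[0,1]^2\to[0,1]$, $O_{\theta,\vartheta}(x,y)=\vartheta(\theta(x)+\theta(y))$, is an overlap function. Then: (i) $\theta(x)=\infty$ if and only if $x=0$; (ii) $\vartheta(x)=0$ if and only if $x=\infty$.
   Context: "Decreasing" means non-increasing and "increasing" means non-decreasing. Arithmetic in $[0,\infty]$ uses $c+\infty=\infty+c=\infty$; continuity on $[0,\infty]$ refers to the usual topology of the extended half-line. An overlap function is a map $O:[0,1]^2\to[0,1]$ that is (O1) commutative, (O2) $O(x,y)=0$ iff $xy=0$, (O3) $O(x,y)=1$ iff $xy=1$, (O4) increasing in each variable, (O5) continuous. If $O_{\theta,\vartheta}$ is an overlap function, $(\theta,\vartheta)$ is called an additive generator pair of it. *)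

theory Defs
  imports "HOL-Analysis.Analysis" "HOL-Library.Extended_Nonnegative_Real"
begin

definition overlap_function :: "(real \<Rightarrow> real \<Rightarrow> real) \<Rightarrow> bool" where
  "overlap_function Ov \<longleftrightarrow>
     (\<forall>x\<in>{0..1}. \<forall>y\<in>{0..1}. Ov x y \<in> {0..1}) \<and>
     (\<forall>x\<in>{0..1}. \<forall>y\<in>{0..1}. Ov x y = Ov y x) \<and>
     (\<forall>x\<in>{0..1}. \<forall>y\<in>{0..1}. Ov x y = 0 \<longleftrightarrow> x * y = 0) \<and>
     (\<forall>x\<in>{0..1}. \<forall>y\<in>{0..1}. Ov x y = 1 \<longleftrightarrow> x * y = 1) \<and>
     (\<forall>x\<in>{0..1}. \<forall>x'\<in>{0..1}. \<forall>y\<in>{0..1}. x \<le> x' \<longrightarrow> Ov x y \<le> Ov x' y) \<and>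
     (\<forall>x\<in>{0..1}. \<forall>y\<in>{0..1}. \<forall>y'\<in>{0..1}. y \<le> y' \<longrightarrow> Ov x y \<le> Ov x y') \<and>
     continuous_on ({0..1} \<times> {0..1}) (\<lambda>(x, y). Ov x y)"

definition O_gen :: "(real \<Rightarrow> ennreal) \<Rightarrow> (ennreal \<Rightarrow> real) \<Rightarrow> real \<Rightarrow> real \<Rightarrow> real" where
  "O_gen \<theta> \<phi> x y = \<phi> (\<theta> x + \<theta> y)"

end

theory Submission
  imports Defs
begin

lemma near0:
  fixes f :: "real \<Rightarrow> 'b::topological_space"
  assumes "continuous_on {0..1} f" "open U" "f 0 \<in> U"
  shows "\<exists>x. 0 < x \<and> x \<le> 1 \<and> f x \<in> U"
proof -
  obtain A where A: "open A" "A \<inter> {0..1} = f -` U \<inter> {0..1}"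
    using assms(1,2) continuous_on_open_invariant by metis
  have "0 \<in> A" using A(2) assms(3) by auto
  then obtain e where e: "e > 0" "ball 0 e \<subseteq> A" using A(1) open_contains_ball by blast
  define x where "x = min (e/2) (1::real)"
  have x: "0 < x" "x \<le> 1" "x \<in> ball 0 e" using e by (auto simp: x_def dist_norm)
  then have "x \<in> A \<inter> {0..1}" using e by auto
  then show ?thesis using A(2) x by auto
qed

theorem theorem3p1:
  fixes \<theta> :: "real \<Rightarrow> ennreal" and \<phi> :: "ennreal \<Rightarrow> real"
  assumes "\<phi> ` UNIV \<subseteq> {0..1}"
    and "continuous_on {0..1} \<theta>" and "antimono_on {0..1} \<theta>"
    and "continuous_on UNIV \<phi>" and "antimono \<phi>"
    and "overlap_function (O_gen \<theta> \<phi>)"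
  shows "(\<forall>x\<in>{0..1}. \<theta> x = \<infinity> \<longleftrightarrow> x = 0) \<and> (\<forall>x. \<phi> x = 0 \<longleftrightarrow> x = \<infinity>)"
proof -
  have Z: "\<And>x y. x\<in>{0..1} \<Longrightarrow> y\<in>{0..1} \<Longrightarrow> \<phi> (\<theta> x + \<theta> y) = 0 \<longleftrightarrow> x * y = 0"
    and O: "\<And>x y. x\<in>{0..1} \<Longrightarrow> y\<in>{0..1} \<Longrightarrow> \<phi> (\<theta> x + \<theta> y) = 1 \<longleftrightarrow> x * y = 1"
    using assms(6) unfolding overlap_function_def O_gen_def by auto
  have pos: "\<And>t. \<phi> t \<ge> 0" using assms(1) by (auto simp: image_subset_iff)
  have am: "\<And>s t. s \<le> t \<Longrightarrow> \<phi> t \<le> \<phi> s" using assms(5) by (auto simp: antimono_def)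
  have ba: "\<theta> 1 \<le> \<theta> 0" using assms(3) by (auto simp: monotone_on_def)
  have t0: "\<theta> 0 = \<infinity>"
  proof (rule ccontr)
    assume fin: "\<theta> 0 \<noteq> \<infinity>"
    have z01: "\<phi> (\<theta> 0 + \<theta> 1) = 0" using Z[of 0 1] by auto
    have o11: "\<phi> (\<theta> 1 + \<theta> 1) = 1" using O[of 1 1] by auto
    show False
    proof (cases "\<theta> 0 + \<theta> 0 \<le> \<theta> 0 + \<theta> 1")
      case True
      then have "\<theta> 0 \<le> \<theta> 1" using fin by (simp add: ennreal_add_left_cancel_le)
      then have "\<theta> 0 = \<theta> 1" using ba by auto
      then show False using z01 o11 by simp
    next
      case False
      have c: "continuous_on {0..1} (\<lambda>x. \<theta> x + \<theta> x)"
        using assms(2) by (intro continuous_on_add) auto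
      obtain x where x: "0 < x" "x \<le> 1" "\<theta> x + \<theta> x \<in> {\<theta> 0 + \<theta> 1<..}"
      proof -
        have "\<theta> 0 + \<theta> 0 \<in> {\<theta> 0 + \<theta> 1<..}" using False by (simp only: greaterThan_iff not_le)
        from near0[OF c open_greaterThan this] show ?thesis using that by blast
      qed
      have "\<phi> (\<theta> x + \<theta> x) \<le> 0" using am[of "\<theta> 0 + \<theta> 1" "\<theta> x + \<theta> x"] x(3) z01 by auto
      then have "\<phi> (\<theta> x + \<theta> x) = 0" using pos[of "\<theta> x + \<theta> x"] by linarith
      then show False using Z[of x x] x by auto
    qed
  qed
  have pinf: "\<phi> \<infinity> = 0" using Z[of 0 0] t0 by auto
  have part1: "\<forall>x\<in>{0..1}. \<theta> x = \<infinity> \<longleftrightarrow> x = 0"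
  proof
    fix x :: real assume x: "x \<in> {0..1}"
    show "\<theta> x = \<infinity> \<longleftrightarrow> x = 0"
    proof
      assume "\<theta> x = \<infinity>"
      then have "\<phi> (\<theta> x + \<theta> x) = 0" using pinf by simp
      then show "x = 0" using Z[OF x x] by simp
    qed (use t0 in auto)
  qed
  have part2: "\<forall>t. \<phi> t = 0 \<longleftrightarrow> t = \<infinity>"
  proof (intro allI iffI)
    fix t assume pt: "\<phi> t = 0"
    show "t = \<infinity>"
    proof (rule ccontr)
      assume "t \<noteq> \<infinity>"
      then have "\<theta> 0 \<in> {t<..}" using t0 by (simp add: top.not_eq_extremum)
      then obtain x where x: "0 < x" "x \<le> 1" "\<theta> x \<in> {t<..}"
        using near0[OF assms(2), of "{t<..}"] by auto
      have "t \<le> \<theta> x + \<theta> x" using x(3) by (auto intro: order.trans[OF _ add_increasing2])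
      then have "\<phi> (\<theta> x + \<theta> x) \<le> 0" using am pt by fastforce
      then have "\<phi> (\<theta> x + \<theta> x) = 0" using pos[of "\<theta> x + \<theta> x"] by linarith
      then show False using Z[of x x] x by auto
    qed
  qed (use pinf in simp)
  show ?thesis using part1 part2 by blast
qed

end
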